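(* Let $\Omega$ be a region of $\mathbb{C}$ and let $F:\Omega\to\mathbb{M}_n$ be a nonconstant analytic function. If $z_0\in\Omega$ is a point at which every one of the functions $z\mapsto s_k(F(z))$, $1\leq k\leq n$, attains its minimum value over $\Omega$, then $F(z_0)$ is not invertible.
   Context: A region is a nonempty open connected subset of $\mathbb{C}$. $\mathbb{M}_n$ is the set of $n\times n$ complex matrices; $F$ is analytic if each entry is analytic. For $A\in\mathbb{M}_n$, the singular values $s_1(A)\geq\cdots\geq s_n(A)$ are the nonnegative square roots of the eigenvalues of $A^*A$ in nonincreasing order. *)

theory Defs
  imports "HOL-Analysis.Analysis" "Jordan_Normal_Form.Schur_Decomposition"
begin

text \<open>The eigenvalues of the (positive semidefinite) matrix A^* A, counted with
  algebraic multiplicity, are the roots of its characteristic polynomial.\<close>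

definition singular_values :: "complex mat \<Rightarrow> real list" where
  "singular_values A =
     rev (sorted_list_of_multiset
       (image_mset (\<lambda>x. sqrt (Re x)) (proots (char_poly (mat_adjoint A * A)))))"

definition sing_val :: "nat \<Rightarrow> complex mat \<Rightarrow> real" where
  "sing_val k A = singular_values A ! (k - 1)"

end

theory Submission
  imports Defs "HOL-Complex_Analysis.Complex_Analysis"
begin

lemma adj_carrier: "A \<in> carrier_mat n m \<Longrightarrow> mat_adjoint A \<in> carrier_mat m n"
  unfolding mat_adjoint_def by (auto simp: mat_of_rows_def)

lemma adj_index: "A \<in> carrier_mat n m \<Longrightarrow> i < m \<Longrightarrow> j < n \<Longrightarrow> mat_adjoint A $$ (i,j) = cnj (A $$ (j,i))"
  unfolding mat_adjoint_def by (auto simp: mat_of_rows_def)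

lemma adjA_index: assumes "A \<in> carrier_mat n n" "i < n" "j < n"
  shows "(mat_adjoint A * A) $$ (i,j) = (\<Sum>k<n. cnj (A $$ (k,i)) * A $$ (k,j))"
  using assms adj_carrier[OF assms(1)]
  by (auto simp: scalar_prod_def adj_index atLeast0LessThan intro!: sum.cong)

lemma cnj_mult_self: "cnj z * z = complex_of_real ((cmod z)^2)"
  by (metis complex_norm_square mult.commute of_real_power)

lemma ev_nonneg:
  fixes A :: "complex mat"
  assumes A: "A \<in> carrier_mat n n" and x: "poly (char_poly (mat_adjoint A * A)) x = 0"
  shows "Im x = 0 \<and> Re x \<ge> 0"
proof -
  let ?B = "mat_adjoint A * A"
  have B: "?B \<in> carrier_mat n n" using adj_carrier[OF A] A by auto
  have "eigenvalue ?B x" using eigenvalue_root_char_poly[OF B] x by simp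
  then obtain v where v: "v \<in> carrier_vec n" "v \<noteq> 0\<^sub>v n" "?B *\<^sub>v v = x \<cdot>\<^sub>v v"
    unfolding eigenvalue_def eigenvector_def using B by auto
  define w where "w = (\<lambda>k. \<Sum>j<n. A $$ (k,j) * v $ j)"
  have Bv: "(?B *\<^sub>v v) $ i = (\<Sum>k<n. cnj (A $$ (k,i)) * w k)" if i: "i < n" for i
  proof -
    have "(?B *\<^sub>v v) $ i = (\<Sum>j<n. ?B $$ (i,j) * v $ j)"
    proof -
      have d: "dim_row ?B = n" "dim_col ?B = n" "dim_vec v = n" using B v(1) by auto
      show ?thesis using i d by (simp add: scalar_prod_def atLeast0LessThan del: index_mult_mat(2,3))
    qed
    also have "\<dots> = (\<Sum>j<n. \<Sum>k<n. cnj (A $$ (k,i)) * A $$ (k,j) * v $ j)"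
      using adjA_index[OF A i] by (auto simp: sum_distrib_right intro!: sum.cong)
    also have "\<dots> = (\<Sum>k<n. cnj (A $$ (k,i)) * w k)"
      unfolding w_def by (subst sum.swap) (auto simp: sum_distrib_left mult.assoc intro!: sum.cong)
    finally show ?thesis .
  qed
  have "(\<Sum>i<n. cnj (v $ i) * (?B *\<^sub>v v) $ i) = (\<Sum>i<n. \<Sum>k<n. cnj (v $ i) * cnj (A $$ (k,i)) * w k)"
    using Bv by (auto simp: sum_distrib_left mult.assoc intro!: sum.cong)
  also have "\<dots> = (\<Sum>k<n. (\<Sum>i<n. cnj (A $$ (k,i) * v $ i)) * w k)"
    by (subst sum.swap) (simp add: sum_distrib_right sum_distrib_left mult_ac)
  also have "\<dots> = (\<Sum>k<n. cnj (w k) * w k)"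
    by (simp add: w_def cnj_sum)
  also have "\<dots> = of_real (\<Sum>k<n. (cmod (w k))^2)"
    by (simp add: cnj_mult_self)
  finally have lhs: "(\<Sum>i<n. cnj (v $ i) * (?B *\<^sub>v v) $ i) = of_real (\<Sum>k<n. (cmod (w k))^2)" .
  have "(\<Sum>i<n. cnj (v $ i) * (?B *\<^sub>v v) $ i) = x * of_real (\<Sum>i<n. (cmod (v $ i))^2)"
    using v by (simp add: sum_distrib_left mult.left_commute cnj_mult_self)
  with lhs have eq: "x * of_real (\<Sum>i<n. (cmod (v $ i))^2) = of_real (\<Sum>k<n. (cmod (w k))^2)" by simp
  obtain i where i: "i < n" "v $ i \<noteq> 0" using v(1,2) by (metis carrier_vecD eq_vecI index_zero_vec(1) index_zero_vec(2))
  have pos: "(\<Sum>i<n. (cmod (v $ i))^2) > 0"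
    by (rule sum_pos2[of _ i]) (use i in auto)
  define S where "S = (\<Sum>i<n. (cmod (v $ i))^2)"
  define T where "T = (\<Sum>k<n. (cmod (w k))^2)"
  have T: "T \<ge> 0" unfolding T_def by (simp add: sum_nonneg)
  have "x = of_real T / of_real S"
    using eq pos unfolding S_def[symmetric] T_def[symmetric] by (simp add: eq_divide_eq)
  then have "x = of_real (T / S)" by simp
  then show ?thesis using T pos unfolding S_def[symmetric] by simp
qed

definition tr :: "complex mat \<Rightarrow> complex" where "tr M = (\<Sum>i<dim_row M. M $$ (i,i))"

lemma tr_comm: assumes X: "X \<in> carrier_mat n n" and Y: "Y \<in> carrier_mat n n"
  shows "tr (X * Y) = tr (Y * X)"
proof -
  have "tr (X * Y) = (\<Sum>i<n. \<Sum>k<n. X $$ (i,k) * Y $$ (k,i))"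
    using X Y by (auto simp: tr_def scalar_prod_def atLeast0LessThan intro!: sum.cong)
  also have "\<dots> = (\<Sum>k<n. \<Sum>i<n. Y $$ (k,i) * X $$ (i,k))"
    by (subst sum.swap) (simp add: mult.commute)
  also have "\<dots> = tr (Y * X)"
    using X Y by (auto simp: tr_def scalar_prod_def atLeast0LessThan intro!: sum.cong)
  finally show ?thesis .
qed

lemma tr_det_schur:
  fixes B :: "complex mat"
  assumes B: "B \<in> carrier_mat n n" and c: "char_poly B = (\<Prod>a\<leftarrow>as. [:- a, 1:])"
  shows "tr B = sum_list as \<and> det B = prod_list as"
proof -
  obtain C P Q where S: "schur_decomposition B as = (C,P,Q)" by (cases "schur_decomposition B as") auto
  from schur_decomposition[OF B c S] have sw: "similar_mat_wit B C P Q" and ut: "upper_triangular C"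
    and dg: "diag_mat C = as" by auto
  from sw B have C: "C \<in> carrier_mat n n" and P: "P \<in> carrier_mat n n" and Q: "Q \<in> carrier_mat n n"
    and PQ: "P * Q = 1\<^sub>m n" and QP: "Q * P = 1\<^sub>m n" and BPCQ: "B = P * C * Q"
    unfolding similar_mat_wit_def Let_def by auto
  have "tr B = tr ((P * C) * Q)" using BPCQ by simp
  also have "\<dots> = tr (Q * (P * C))" by (rule tr_comm[of _ n]) (use P C Q in auto)
  also have "Q * (P * C) = (Q * P) * C" using P C Q by (simp add: assoc_mult_mat)
  also have "\<dots> = C" using QP C by simp
  finally have "tr B = tr C" .
  also have "tr C = sum_list (diag_mat C)"
    using C by (simp add: tr_def diag_mat_def sum_list_sum_nth atLeast0LessThan)
  finally have t: "tr B = sum_list as" using dg by simp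
  have "det B = det P * det C * det Q" using BPCQ P C Q by (simp add: det_mult[of _ n])
  also have "\<dots> = det (P * Q) * det C" using P Q by (simp add: det_mult[of _ n])
  also have "\<dots> = det C" using PQ by simp
  also have "\<dots> = prod_list as" using det_upper_triangular[OF ut C] dg by simp
  finally show ?thesis using t by simp
qed

interpretation cnj_hom: comm_ring_hom cnj by unfold_locales auto

lemma det_adj: fixes A :: "complex mat" assumes A: "A \<in> carrier_mat n n"
  shows "det (mat_adjoint A) = cnj (det A)"
proof -
  have "mat_adjoint A = map_mat cnj (transpose_mat A)"
    using A by (intro eq_matI) (auto simp: adj_index adj_carrier[OF A, THEN carrier_matD(1)] adj_carrier[OF A, THEN carrier_matD(2)])
  then show ?thesis using det_transpose[OF A] by simp
qed

lemma proots_lin_prod: "proots (\<Prod>a\<leftarrow>as. [:- a, 1:]) = mset (as::complex list)"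
proof (induction as)
  case (Cons a as)
  let ?P = "(\<Prod>a\<leftarrow>as. [:- a, 1:])"
  have nz: "?P \<noteq> 0" by (auto simp: prod_list_zero_iff)
  have "proots ([:- a, 1:] * ?P) = proots [:- a, 1:] + proots ?P"
    by (rule proots_mult) (use nz in auto)
  then show ?case using Cons by simp
qed simp

lemma prod_list_sqrt: "prod_list (map sqrt rs) = sqrt (prod_list rs)"
  by (induction rs) (auto simp: real_sqrt_mult)

lemma of_real_prod_list': "complex_of_real (prod_list rs) = prod_list (map complex_of_real rs)"
  by (induction rs) auto

lemma of_real_sum_list': "complex_of_real (sum_list rs) = sum_list (map complex_of_real rs)"
  by (induction rs) auto

lemma sv_props:
  fixes A :: "complex mat"
  assumes A: "A \<in> carrier_mat n n"
  shows "length (singular_values A) = n \<and> (\<forall>s\<in>set (singular_values A). s \<ge> 0) \<and>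
    prod_list (singular_values A) = cmod (det A) \<and>
    sum_list (map (\<lambda>s. s^2) (singular_values A)) = (\<Sum>i<n. \<Sum>k<n. (cmod (A $$ (k,i)))^2)"
proof -
  let ?B = "mat_adjoint A * A"
  have B: "?B \<in> carrier_mat n n" using adj_carrier[OF A] A by auto
  obtain as where c: "char_poly ?B = (\<Prod>a\<leftarrow>as. [:- a, 1:])" and len: "length as = n"
    using char_poly_factorized[OF B] by blast
  have pr: "proots (char_poly ?B) = mset as" using c proots_lin_prod by simp
  have nn: "Im a = 0 \<and> Re a \<ge> 0" if a: "a \<in> set as" for a
  proof -
    have "poly (char_poly ?B) a = 0" using a unfolding c
      by (simp add: poly_prod_list prod_list_zero_iff)
    then show ?thesis by (rule ev_nonneg[OF A])
  qed
  define rs where "rs = map Re as"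
  have asr: "as = map complex_of_real rs" unfolding rs_def
    by (simp, rule sym, rule map_idI) (use nn in \<open>auto simp: complex_eq_iff\<close>)
  have rsnn: "\<forall>r\<in>set rs. r \<ge> 0" unfolding rs_def using nn by auto
  have lrs: "length rs = n" using len rs_def by simp
  have ms: "mset (singular_values A) = mset (map sqrt rs)"
    unfolding singular_values_def pr by (simp add: rs_def o_def)
  have l: "length (singular_values A) = n"
    using arg_cong[OF ms, of size] lrs by simp
  have st: "set (singular_values A) = sqrt ` set rs"
    using arg_cong[OF ms, of set_mset] by simp
  have p: "prod_list (singular_values A) = sqrt (prod_list rs)"
    by (metis ms prod_list_sqrt prod_mset_prod_list)
  have "sum_list (map (\<lambda>s. s^2) (singular_values A)) = sum_list (map (\<lambda>s. s^2) (map sqrt rs))"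
    by (metis ms mset_map sum_mset_sum_list)
  also have "\<dots> = sum_list rs"
    using rsnn by (induction rs) auto
  finally have sq: "sum_list (map (\<lambda>s. s^2) (singular_values A)) = sum_list rs" .
  from tr_det_schur[OF B c] have td: "tr ?B = sum_list as" "det ?B = prod_list as" by auto
  have "det ?B = cnj (det A) * det A" using det_mult[OF adj_carrier[OF A] A] det_adj[OF A] by simp
  also have "\<dots> = complex_of_real ((cmod (det A))^2)" by (rule cnj_mult_self)
  finally have "complex_of_real (prod_list rs) = complex_of_real ((cmod (det A))^2)"
    using td(2) asr of_real_prod_list' by metis
  then have prs: "prod_list rs = (cmod (det A))^2" using of_real_eq_iff by blast
  have "tr ?B = (\<Sum>i<n. \<Sum>k<n. cnj (A $$ (k,i)) * A $$ (k,i))"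
  proof -
    have "dim_row ?B = n" using B by auto
    then show ?thesis unfolding tr_def by (simp add: adjA_index[OF A] del: index_mult_mat)
  qed
  also have "\<dots> = complex_of_real (\<Sum>i<n. \<Sum>k<n. (cmod (A $$ (k,i)))^2)"
    by (simp add: cnj_mult_self)
  finally have "complex_of_real (sum_list rs) = complex_of_real (\<Sum>i<n. \<Sum>k<n. (cmod (A $$ (k,i)))^2)"
    using td(1) asr of_real_sum_list' by metis
  then have srs: "sum_list rs = (\<Sum>i<n. \<Sum>k<n. (cmod (A $$ (k,i)))^2)" using of_real_eq_iff by blast
  show ?thesis using l st rsnn p prs sq srs by auto
qed

lemma prod_eq_pos:
  fixes a b :: "nat \<Rightarrow> real"
  assumes le: "\<And>i. i < n \<Longrightarrow> 0 \<le> a i \<and> a i \<le> b i"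
    and eq: "(\<Prod>i<n. a i) = (\<Prod>i<n. b i)" and pos: "(\<Prod>i<n. a i) > 0"
    and j: "j < n"
  shows "a j = b j"
proof (rule ccontr)
  assume ne: "a j \<noteq> b j"
  have apos: "a i > 0" if "i < n" for i
  proof -
    have "a i \<noteq> 0" using pos that by (metis finite_lessThan lessThan_iff less_irrefl prod_zero_iff)
    then show ?thesis using le[OF that] by simp
  qed
  have lt: "a j < b j" using le[OF j] ne by simp
  let ?R = "{..<n} - {j}"
  have ra: "(\<Prod>i\<in>?R. a i) > 0" by (rule prod_pos) (use apos in auto)
  have rab: "(\<Prod>i\<in>?R. a i) \<le> (\<Prod>i\<in>?R. b i)" by (rule prod_mono) (use le in auto)
  have "(\<Prod>i<n. a i) = a j * (\<Prod>i\<in>?R. a i)" using j by (simp add: prod.remove)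
  also have "\<dots> < b j * (\<Prod>i\<in>?R. a i)" using lt ra by simp
  also have "\<dots> \<le> b j * (\<Prod>i\<in>?R. b i)" using rab lt apos[OF j] by (intro mult_left_mono) auto
  also have "\<dots> = (\<Prod>i<n. b i)" using j by (simp add: prod.remove)
  finally show False using eq by simp
qed

lemma cmod_diff_sq: "(cmod (x - y))^2 = (cmod x)^2 + (cmod y)^2 - 2 * Re (cnj y * x)"
  by (simp only: cmod_power2) (simp add: power2_eq_square algebra_simps)

lemma det_holo:
  fixes F :: "complex \<Rightarrow> complex mat"
  assumes dims: "\<And>z. z \<in> S \<Longrightarrow> F z \<in> carrier_mat n n"
    and hol: "\<And>i j. i < n \<Longrightarrow> j < n \<Longrightarrow> (\<lambda>z. F z $$ (i, j)) holomorphic_on S"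
  shows "(\<lambda>z. det (F z)) holomorphic_on S"
proof -
  let ?G = "\<lambda>z. (\<Sum> p \<in> {p. p permutes {0 ..< n}}. signof p * (\<Prod> i = 0 ..< n. F z $$ (i, p i)))"
  have "?G holomorphic_on S"
  proof (intro holomorphic_on_sum holomorphic_on_mult holomorphic_on_const holomorphic_on_prod)
    fix p i assume "p \<in> {p. p permutes {0 ..< n}}" "i \<in> {0..<n}"
    then show "(\<lambda>z. F z $$ (i, p i)) holomorphic_on S"
      by (intro hol) (auto dest: permutes_in_image)
  qed
  moreover have "?G z = det (F z)" if "z \<in> S" for z
    using det_def'[OF dims[OF that]] by simp
  ultimately show ?thesis by (rule holomorphic_transform)
qed

lemma prod_list_nth': "prod_list xs = (\<Prod>i<length xs. xs ! i)"
  by (simp add: prod.list_conv_set_nth atLeast0LessThan)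

lemma invertible_det_nz:
  fixes A :: "complex mat"
  assumes A: "A \<in> carrier_mat n n" and inv: "invertible_mat A"
  shows "det A \<noteq> 0"
proof -
  from inv obtain B where AB: "A * B = 1\<^sub>m (dim_row A)" and BA: "B * A = 1\<^sub>m (dim_row B)"
    unfolding invertible_mat_def inverts_mat_def by auto
  have "dim_col B = n" using arg_cong[OF AB, of dim_col] A by simp
  moreover have "dim_row B = n" using arg_cong[OF BA, of dim_col] A by simp
  ultimately have B: "B \<in> carrier_mat n n" by auto
  have "det A * det B = 1" using arg_cong[OF AB, of det] det_mult[OF A B] A by simp
  then show ?thesis by auto
qed

theorem theorem9:
  fixes \<Omega> :: "complex set" and F :: "complex \<Rightarrow> complex mat" and n :: nat and z0 :: complex
  assumes region: "open \<Omega>" "connected \<Omega>" "\<Omega> \<noteq> {}"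
    and dims: "\<And>z. z \<in> \<Omega> \<Longrightarrow> F z \<in> carrier_mat n n"
    and analytic: "\<And>i j. i < n \<Longrightarrow> j < n \<Longrightarrow> (\<lambda>z. F z $$ (i, j)) analytic_on \<Omega>"
    and nonconst: "\<not> (\<exists>C. \<forall>z\<in>\<Omega>. F z = C)"
    and z0: "z0 \<in> \<Omega>"
    and minimum: "\<And>k z. 1 \<le> k \<Longrightarrow> k \<le> n \<Longrightarrow> z \<in> \<Omega> \<Longrightarrow> sing_val k (F z0) \<le> sing_val k (F z)"
  shows "\<not> invertible_mat (F z0)"
proof
  assume inv: "invertible_mat (F z0)"
  have hol: "(\<lambda>z. F z $$ (i, j)) holomorphic_on \<Omega>" if "i < n" "j < n" for i j
    using analytic[OF that] by (rule analytic_imp_holomorphic)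
  define sv where "sv = (\<lambda>z. singular_values (F z))"
  define fro where "fro = (\<lambda>z. \<Sum>i<n. \<Sum>k<n. (cmod (F z $$ (k,i)))^2)"
  have svp: "length (sv z) = n \<and> (\<forall>s\<in>set (sv z). s \<ge> 0) \<and>
    (\<Prod>i<n. sv z ! i) = cmod (det (F z)) \<and> (\<Sum>i<n. (sv z ! i)^2) = fro z" if "z \<in> \<Omega>" for z
  proof -
    note P = sv_props[OF dims[OF that]]
    have l: "length (sv z) = n" using P sv_def by simp
    have "prod_list (sv z) = (\<Prod>i<n. sv z ! i)" using l by (simp add: prod_list_nth')
    moreover have "sum_list (map (\<lambda>s. s^2) (sv z)) = (\<Sum>i<n. (sv z ! i)^2)"
      using l by (simp add: sum_list_sum_nth atLeast0LessThan)
    ultimately show ?thesis using P l unfolding sv_def fro_def by auto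
  qed
  have mn: "sv z0 ! i \<le> sv z ! i" if "z \<in> \<Omega>" "i < n" for z i
    using minimum[of "Suc i" z] that unfolding sv_def sing_val_def by simp
  have nn0: "0 \<le> sv z0 ! i" if "i < n" for i
    using svp[OF z0] that by auto
  have d0: "det (F z0) \<noteq> 0" by (rule invertible_det_nz[OF dims[OF z0] inv])
  have dle: "cmod (det (F z0)) \<le> cmod (det (F z))" if z: "z \<in> \<Omega>" for z
  proof -
    have "(\<Prod>i<n. sv z0 ! i) \<le> (\<Prod>i<n. sv z ! i)"
      by (rule prod_mono) (use mn[OF z] nn0 in auto)
    then show ?thesis using svp[OF z] svp[OF z0] by simp
  qed
  have dnz: "det (F z) \<noteq> 0" if "z \<in> \<Omega>" for z
    using dle[OF that] d0 by auto
  have dh: "(\<lambda>z. det (F z)) holomorphic_on \<Omega>" by (rule det_holo[OF dims hol])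
  have ih: "(\<lambda>z. inverse (det (F z))) holomorphic_on \<Omega>"
    by (rule holomorphic_on_inverse[OF dh]) (use dnz in auto)
  have "(\<lambda>z. inverse (det (F z))) constant_on \<Omega>"
  proof (rule maximum_modulus_principle[OF ih region(1,2) region(1) order_refl z0])
    fix z assume z: "z \<in> \<Omega>"
    show "cmod (inverse (det (F z))) \<le> cmod (inverse (det (F z0)))"
      using dle[OF z] d0 by (simp add: norm_inverse le_imp_inverse_le)
  qed
  then have deq: "det (F z) = det (F z0)" if "z \<in> \<Omega>" for z
    using that z0 unfolding constant_on_def by (metis inverse_inverse_eq)
  have sveq: "sv z ! i = sv z0 ! i" if z: "z \<in> \<Omega>" and i: "i < n" for z i
  proof -
    have "(\<Prod>i<n. sv z0 ! i) > 0" using svp[OF z0] d0 by simp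
    moreover have "(\<Prod>i<n. sv z0 ! i) = (\<Prod>i<n. sv z ! i)"
      using svp[OF z] svp[OF z0] deq[OF z] by simp
    ultimately show ?thesis
      using prod_eq_pos[of n "\<lambda>i. sv z0 ! i" "\<lambda>i. sv z ! i" i] mn[OF z] nn0 i by auto
  qed
  have froeq: "fro z = fro z0" if z: "z \<in> \<Omega>" for z
    using svp[OF z] svp[OF z0] sveq[OF z] by (metis (no_types, lifting) lessThan_iff sum.cong)
  define g where "g = (\<lambda>z. \<Sum>i<n. \<Sum>k<n. cnj (F z0 $$ (k,i)) * F z $$ (k,i))"
  have gh: "g holomorphic_on \<Omega>" unfolding g_def
    by (intro holomorphic_on_sum holomorphic_on_mult holomorphic_on_const hol) auto
  have ident: "(\<Sum>i<n. \<Sum>k<n. (cmod (F z $$ (k,i) - F z0 $$ (k,i)))^2) = fro z + fro z0 - 2 * Re (g z)" for z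
    unfolding fro_def g_def by (simp add: cmod_diff_sq sum_subtractf sum.distrib Re_sum sum_distrib_left)
  have nnsum: "0 \<le> (\<Sum>i<n. \<Sum>k<n. (cmod (F z $$ (k,i) - F z0 $$ (k,i)))^2)" for z
    by (intro sum_nonneg) auto
  have g0: "Re (g z0) = fro z0" using ident[of z0] by simp
  have gle: "Re (g z) \<le> Re (g z0)" if "z \<in> \<Omega>" for z
    using ident[of z] nnsum[of z] froeq[OF that] g0 by simp
  have eh: "(\<lambda>z. exp (g z)) holomorphic_on \<Omega>"
    using gh by (intro holomorphic_on_compose[OF gh, unfolded o_def] holomorphic_on_exp) 
  have "(\<lambda>z. exp (g z)) constant_on \<Omega>"
  proof (rule maximum_modulus_principle[OF eh region(1,2) region(1) order_refl z0])
    fix z assume z: "z \<in> \<Omega>"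
    show "cmod (exp (g z)) \<le> cmod (exp (g z0))"
      using gle[OF z] by (simp add: norm_exp_eq_Re)
  qed
  then have "exp (g z) = exp (g z0)" if "z \<in> \<Omega>" for z
    using that z0 unfolding constant_on_def by metis
  then have greq: "Re (g z) = Re (g z0)" if "z \<in> \<Omega>" for z
    using that by (metis exp_inj_iff norm_exp_eq_Re)
  have "F z = F z0" if z: "z \<in> \<Omega>" for z
  proof -
    have s0: "(\<Sum>i<n. \<Sum>k<n. (cmod (F z $$ (k,i) - F z0 $$ (k,i)))^2) = 0"
      using ident[of z] froeq[OF z] greq[OF z] g0 by simp
    have "(cmod (F z $$ (k,i) - F z0 $$ (k,i)))^2 = 0" if "i < n" "k < n" for i k
    proof -
      have "(\<Sum>k<n. (cmod (F z $$ (k,i) - F z0 $$ (k,i)))^2) = 0"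
        using s0 that by (subst (asm) sum_nonneg_eq_0_iff) (auto intro: sum_nonneg)
      then show ?thesis using that by (subst (asm) sum_nonneg_eq_0_iff) auto
    qed
    then have "F z $$ (k,i) = F z0 $$ (k,i)" if "i < n" "k < n" for i k
      using that by simp
    then show ?thesis using dims[OF z] dims[OF z0] by (intro eq_matI) auto
  qed
  then show False using nonconst by blast
qed

end
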